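(* Let $\hat W^{\rm opt,narrow}$ be the optimal value of (P1) when all pairs are restricted to lie in $\mathcal M^{\rm narrow}$, and let $\hat W^{\rm narrow}$ be the value of the output of Algorithm IIa. Then $\hat W^{\rm narrow}\ge \hat W^{\rm opt,narrow}/(1+T+\Delta+2J)$.
   Context: Setup. Fix integers $K\ge1$, $N\ge1$, $T\ge1$, $J\ge0$, $\Delta\ge0$. Let $\{\mathcal G_1,\dots,\mathcal G_L\}$ be a partition of $\{1,\dots,K\}$. A chunk is a vector $c\in\{0,1\}^N$ whose ones form a nonempty contiguous block; ${\rm Tail}(c)$ is the largest index $i$ with $c(i)=1$; $i\in c$ means $c(i)=1$; chunks intersect if they share an index. Let $\mathcal U$ be the family of nonempty $U\subseteq\{1,\dots,K\}$ with $|U|\le T$ and $|U\cap\mathcal G_s|\le1$ for all $s$; pairs are elements of $\mathcal M=\mathcal U\times\mathcal C$. Given metrics $p(U,c)\ge0$, weights $\beta^q(U,c)\in[0,1]$ ($q=1,\dots,J$), and binary weights $\alpha^q(U,c)\in\{0,1\}$ ($q$ in a finite set $\mathcal I$) with $\sum_{q\in\mathcal I}\alpha^q(U,c)\le\Delta$ for every pair. A set $F$ of pairs is feasible if: each group meets $U$ for at most one $(U,c)\in F$; each index $i$ lies in $c$ for at most one $(U,c)\in F$; $\sum_F\beta^q\le1$ for all $q\le J$; $\sum_F\alpha^q\le1$ for all $q\in\mathcal I$. Problem (P1) maximizes $\sum_F p$ over feasible $F$. Pairs $(U,c),(U',c')$ conflict if some group meets both $U$ and $U'$, or $c,c'$ intersect,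 or some $q\in\mathcal I$ has $\alpha^q(U,c)=\alpha^q(U',c')=1$. $\mathcal M^{\rm narrow}=\{(U,c):\beta^q(U,c)\le1/2\ \forall q\le J\}$; $\max_{q\le J}\beta^q:=0$ if $J=0$. Algorithm IIa: set $p'=p$ on $\mathcal M^{\rm narrow}$ and an empty stack $S$. For $j=1,\dots,N$: let $(U^*,c^* )$ maximize $p'$ over pairs of $\mathcal M^{\rm narrow}$ with ${\rm Tail}(c)=j$; if $p'(U^*,c^* )>0$, set $\hat p=p'(U^*,c^* )$, push $(U^*,c^* )$ on $S$, and for every $(U,c)\in\mathcal M^{\rm narrow}$ with $p'(U,c)>0$ subtract $\hat p$ from $p'(U,c)$ if $(U,c)$ conflicts with $(U^*,c^* )$, and subtract $2\hat p\max_{q\le J}\beta^q(U,c)$ otherwise. Then, starting with $S'=\emptyset$, repeatedly pop the top of $S$ and add it to $S'$ if $S'$ together with it is feasible. Output $S'$ with value $\hat W^{\rm narrow}=\sum_{(U,c)\in S'}p(U,c)$. *)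

theory Defs
  imports Complex_Main "HOL-Library.Disjoint_Sets"
begin

type_synonym pair = "nat set \<times> nat set"

text \<open>Chunks: nonempty contiguous blocks of ones in a 0/1 vector of length N,
  represented by their support set {a..b} with 1 <= a <= b <= N.\<close>
definition chunks :: "nat \<Rightarrow> nat set set" where
  "chunks N = {{a..b} | a b. 1 \<le> a \<and> a \<le> b \<and> b \<le> N}"

definition Tail :: "nat set \<Rightarrow> nat" where
  "Tail c = Max c"

definition Ufam :: "nat \<Rightarrow> nat \<Rightarrow> nat set set \<Rightarrow> nat set set" where
  "Ufam K T Gs = {U. U \<noteq> {} \<and> U \<subseteq> {1..K} \<and> card U \<le> T \<and> (\<forall>G\<in>Gs. card (U \<inter> G) \<le> 1)}"

definition pairsM :: "nat \<Rightarrow> nat \<Rightarrow> nat \<Rightarrow> nat set set \<Rightarrow> pair set" where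
  "pairsM K N T Gs = Ufam K T Gs \<times> chunks N"

definition narrow :: "nat \<Rightarrow> nat \<Rightarrow> nat \<Rightarrow> nat set set \<Rightarrow> nat \<Rightarrow> (nat \<Rightarrow> pair \<Rightarrow> real) \<Rightarrow> pair set" where
  "narrow K N T Gs J \<beta> = {x \<in> pairsM K N T Gs. \<forall>q\<in>{1..J}. \<beta> q x \<le> 1/2}"

definition maxbeta :: "nat \<Rightarrow> (nat \<Rightarrow> pair \<Rightarrow> real) \<Rightarrow> pair \<Rightarrow> real" where
  "maxbeta J \<beta> x = (if J = 0 then 0 else Max ((\<lambda>q. \<beta> q x) ` {1..J}))"

definition feasible ::
  "nat set set \<Rightarrow> nat \<Rightarrow> nat \<Rightarrow> (nat \<Rightarrow> pair \<Rightarrow> real) \<Rightarrow> 'i set \<Rightarrow> ('i \<Rightarrow> pair \<Rightarrow> real) \<Rightarrow> pair set \<Rightarrow> bool" where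
  "feasible Gs N J \<beta> I \<alpha> F \<longleftrightarrow>
     (\<forall>G\<in>Gs. card {x \<in> F. fst x \<inter> G \<noteq> {}} \<le> 1) \<and>
     (\<forall>i\<in>{1..N}. card {x \<in> F. i \<in> snd x} \<le> 1) \<and>
     (\<forall>q\<in>{1..J}. (\<Sum>x\<in>F. \<beta> q x) \<le> 1) \<and>
     (\<forall>q\<in>I. (\<Sum>x\<in>F. \<alpha> q x) \<le> 1)"

definition conflict :: "nat set set \<Rightarrow> 'i set \<Rightarrow> ('i \<Rightarrow> pair \<Rightarrow> real) \<Rightarrow> pair \<Rightarrow> pair \<Rightarrow> bool" where
  "conflict Gs I \<alpha> x y \<longleftrightarrow>
     (\<exists>G\<in>Gs. fst x \<inter> G \<noteq> {} \<and> fst y \<inter> G \<noteq> {}) \<or>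
     snd x \<inter> snd y \<noteq> {} \<or>
     (\<exists>q\<in>I. \<alpha> q x = 1 \<and> \<alpha> q y = 1)"

definition Wopt_narrow ::
  "nat \<Rightarrow> nat \<Rightarrow> nat \<Rightarrow> nat set set \<Rightarrow> nat \<Rightarrow> (nat \<Rightarrow> pair \<Rightarrow> real) \<Rightarrow> 'i set \<Rightarrow> ('i \<Rightarrow> pair \<Rightarrow> real)
     \<Rightarrow> (pair \<Rightarrow> real) \<Rightarrow> real" where
  "Wopt_narrow K N T Gs J \<beta> I \<alpha> p =
     Max {sum p F | F. F \<subseteq> narrow K N T Gs J \<beta> \<and> feasible Gs N J \<beta> I \<alpha> F}"

text \<open>Phase 1 of Algorithm IIa as a relation on a run: pp j is p' after iteration j
  (pp 0 = p on narrow pairs), sel j is the pair pushed at iteration j (None if nothing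
  is pushed). Ties in the maximization are broken arbitrarily.\<close>
definition phase1_run ::
  "nat \<Rightarrow> nat \<Rightarrow> nat \<Rightarrow> nat set set \<Rightarrow> nat \<Rightarrow> (nat \<Rightarrow> pair \<Rightarrow> real) \<Rightarrow> 'i set \<Rightarrow> ('i \<Rightarrow> pair \<Rightarrow> real)
     \<Rightarrow> (pair \<Rightarrow> real) \<Rightarrow> (nat \<Rightarrow> pair \<Rightarrow> real) \<Rightarrow> (nat \<Rightarrow> pair option) \<Rightarrow> bool" where
  "phase1_run K N T Gs J \<beta> I \<alpha> p pp sel \<longleftrightarrow>
     (let Mn = narrow K N T Gs J \<beta> in
      (\<forall>x\<in>Mn. pp 0 x = p x) \<and>
      (\<forall>j\<in>{1..N}.
         let cand = {x \<in> Mn. Tail (snd x) = j} in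
         if (\<exists>y\<in>cand. pp (j-1) y > 0) then
           (\<exists>x. sel j = Some x \<and> x \<in> cand \<and> (\<forall>y\<in>cand. pp (j-1) y \<le> pp (j-1) x) \<and>
              (\<forall>y\<in>Mn. pp j y =
                 (if pp (j-1) y > 0 then
                    (if conflict Gs I \<alpha> y x then pp (j-1) y - pp (j-1) x
                     else pp (j-1) y - 2 * pp (j-1) x * maxbeta J \<beta> y)
                  else pp (j-1) y)))
         else sel j = None \<and> (\<forall>y\<in>Mn. pp j y = pp (j-1) y)))"

text \<open>The stack after phase 1, listed bottom to top (push order).\<close>
definition stack_of :: "nat \<Rightarrow> (nat \<Rightarrow> pair option) \<Rightarrow> pair list" where
  "stack_of N sel = List.map_filter sel [1..<N+1]"

fun greedy :: "(pair set \<Rightarrow> bool) \<Rightarrow> pair list \<Rightarrow> pair set \<Rightarrow> pair set" where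
  "greedy feas [] A = A"
| "greedy feas (x # xs) A = greedy feas xs (if feas (insert x A) then insert x A else A)"

definition output_IIa ::
  "nat \<Rightarrow> nat set set \<Rightarrow> nat \<Rightarrow> (nat \<Rightarrow> pair \<Rightarrow> real) \<Rightarrow> 'i set \<Rightarrow> ('i \<Rightarrow> pair \<Rightarrow> real)
     \<Rightarrow> (nat \<Rightarrow> pair option) \<Rightarrow> pair set" where
  "output_IIa N Gs J \<beta> I \<alpha> sel = greedy (feasible Gs N J \<beta> I \<alpha>) (rev (stack_of N sel)) {}"

end

theory Submission
  imports Defs
begin



lemma greedy_props:
  fixes f :: "pair \<Rightarrow> nat"
  assumes "sorted_wrt (\<lambda>a b. f b < f a) xs" "\<forall>a\<in>A. \<forall>x\<in>set xs. f x < f a" "feas A"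
  shows "feas (greedy feas xs A) \<and> greedy feas xs A \<subseteq> A \<union> set xs \<and> A \<subseteq> greedy feas xs A \<and>
    (\<forall>x\<in>set xs. feas {y\<in>greedy feas xs A. f x < f y} \<and>
       (x \<in> greedy feas xs A \<longleftrightarrow> feas (insert x {y\<in>greedy feas xs A. f x < f y})))"
  using assms
proof (induction xs arbitrary: A)
  case Nil
  then show ?case by simp
next
  case (Cons x xs)
  define A' where "A' = (if feas (insert x A) then insert x A else A)"
  have s: "sorted_wrt (\<lambda>a b. f b < f a) xs" and xl: "\<forall>z\<in>set xs. f z < f x"
    using Cons.prems(1) by auto
  have A'1: "\<forall>a\<in>A'. \<forall>z\<in>set xs. f z < f a"
    using Cons.prems(2) xl by (auto simp: A'_def)
  have A'2: "feas A'" using Cons.prems(3) by (auto simp: A'_def)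
  note IH = Cons.IH[OF s A'1 A'2]
  have R: "greedy feas (x#xs) A = greedy feas xs A'" by (simp add: A'_def)
  have eq: "{y\<in>greedy feas xs A'. f x < f y} = A"
  proof
    show "{y\<in>greedy feas xs A'. f x < f y} \<subseteq> A"
    proof (rule subsetI)
      fix y assume "y \<in> {y\<in>greedy feas xs A'. f x < f y}"
      hence y1: "y \<in> A' \<union> set xs" and y2: "f x < f y" using IH by auto
      have "y \<notin> set xs" using y2 xl by fastforce
      moreover have "y \<noteq> x" using y2 by auto
      ultimately show "y \<in> A" using y1 by (auto simp: A'_def split: if_splits)
    qed
    show "A \<subseteq> {y\<in>greedy feas xs A'. f x < f y}"
      using IH Cons.prems(2) by (auto simp: A'_def split: if_splits)
  qed
  have xin: "x \<in> greedy feas xs A' \<longleftrightarrow> feas (insert x A)"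
  proof
    assume "x \<in> greedy feas xs A'"
    hence "x \<in> A'" using IH xl by auto
    thus "feas (insert x A)"
    proof (cases "feas (insert x A)")
      case False
      then have "A' = A" by (simp add: A'_def)
      with \<open>x \<in> A'\<close> have "insert x A = A" by auto
      with Cons.prems(3) False show ?thesis by simp
    qed
  next
    assume "feas (insert x A)"
    thus "x \<in> greedy feas xs A'" using IH by (auto simp: A'_def)
  qed
  show ?case unfolding R using IH eq xin Cons.prems(3) by (auto simp: A'_def split: if_splits)
qed




locale alg =
  fixes K N T J :: nat and \<Delta> :: nat and Gs :: "nat set set" and p :: "pair \<Rightarrow> real"
    and \<beta> :: "nat \<Rightarrow> pair \<Rightarrow> real" and I :: "'i set" and \<alpha> :: "'i \<Rightarrow> pair \<Rightarrow> real"
    and pp :: "nat \<Rightarrow> pair \<Rightarrow> real" and sel :: "nat \<Rightarrow> pair option"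
  assumes part: "partition_on {1..K} Gs"
    and finI: "finite I"
    and beta: "\<forall>x\<in>pairsM K N T Gs. \<forall>q\<in>{1..J}. 0 \<le> \<beta> q x \<and> \<beta> q x \<le> 1"
    and alpha01: "\<forall>x\<in>pairsM K N T Gs. \<forall>q\<in>I. \<alpha> q x \<in> {0, 1}"
    and alphaD: "\<forall>x\<in>pairsM K N T Gs. (\<Sum>q\<in>I. \<alpha> q x) \<le> real \<Delta>"
    and run: "phase1_run K N T Gs J \<beta> I \<alpha> p pp sel"
begin

definition "Mn = narrow K N T Gs J \<beta>"
abbreviation "PM \<equiv> pairsM K N T Gs"
abbreviation "C \<equiv> conflict Gs I \<alpha>"
abbreviation "mb \<equiv> maxbeta J \<beta>"
abbreviation "feas \<equiv> feasible Gs N J \<beta> I \<alpha>"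

lemma Mn_PM: "x \<in> Mn \<Longrightarrow> x \<in> PM"
  by (simp add: Mn_def narrow_def)

lemma Mn_narrow: "x \<in> Mn \<Longrightarrow> q \<in> {1..J} \<Longrightarrow> \<beta> q x \<le> 1/2"
  by (simp add: Mn_def narrow_def)

lemma Max_ivl: "a \<le> b \<Longrightarrow> Max {a..(b::nat)} = b"
  by (rule Max_eqI) auto

lemma chunk: "x \<in> PM \<Longrightarrow> \<exists>a b. snd x = {a..b} \<and> 1 \<le> a \<and> a \<le> b \<and> b \<le> N \<and> Tail (snd x) = b"
  by (auto simp: pairsM_def chunks_def Tail_def Max_ivl)

lemma tail_in: "x \<in> PM \<Longrightarrow> Tail (snd x) \<in> snd x \<and> Tail (snd x) \<in> {1..N}"
  using chunk[of x] by auto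

lemma Uprops: "x \<in> PM \<Longrightarrow> fst x \<subseteq> {1..K} \<and> card (fst x) \<le> T"
  by (auto simp: pairsM_def Ufam_def)

lemma finite_Mn: "finite Mn"
proof -
  have "Mn \<subseteq> Pow {1..K} \<times> Pow {1..N}"
    by (auto simp: Mn_def narrow_def pairsM_def Ufam_def chunks_def)
  thus ?thesis by (rule finite_subset) auto
qed

lemma mb_ge: "x \<in> PM \<Longrightarrow> q \<in> {1..J} \<Longrightarrow> \<beta> q x \<le> mb x"
  by (auto simp: maxbeta_def intro!: Max_ge)

lemma mb_nonneg: "x \<in> PM \<Longrightarrow> 0 \<le> mb x"
proof (cases "J = 0")
  case True then show ?thesis by (simp add: maxbeta_def)
next
  case False
  assume x: "x \<in> PM"
  hence "\<beta> 1 x \<le> mb x" using False by (intro mb_ge) auto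
  moreover have "0 \<le> \<beta> 1 x" using beta x False by auto
  ultimately show ?thesis by linarith
qed

lemma mb_le_sum: "x \<in> PM \<Longrightarrow> mb x \<le> (\<Sum>q\<in>{1..J}. \<beta> q x)"
proof (cases "J = 0")
  case True then show ?thesis by (simp add: maxbeta_def)
next
  case False
  assume x: "x \<in> PM"
  have "Max ((\<lambda>q. \<beta> q x) ` {1..J}) \<in> (\<lambda>q. \<beta> q x) ` {1..J}"
    using False by (intro Max_in) auto
  then obtain q where q0: "q \<in> {1..J}" "Max ((\<lambda>q. \<beta> q x) ` {1..J}) = \<beta> q x" by blast
  hence q: "q \<in> {1..J}" "mb x = \<beta> q x" using False by (auto simp: maxbeta_def)
  have "\<beta> q x \<le> (\<Sum>q\<in>{1..J}. \<beta> q x)"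
    by (rule member_le_sum) (use q beta x in auto)
  thus ?thesis using q by simp
qed

lemma run0: "x \<in> Mn \<Longrightarrow> pp 0 x = p x"
  using run by (simp add: phase1_run_def Let_def Mn_def)

lemma run_step: "j \<in> {1..N} \<Longrightarrow>
  (if (\<exists>y\<in>{x \<in> Mn. Tail (snd x) = j}. pp (j-1) y > 0) then
           (\<exists>x. sel j = Some x \<and> x \<in> {x \<in> Mn. Tail (snd x) = j} \<and> (\<forall>y\<in>{x \<in> Mn. Tail (snd x) = j}. pp (j-1) y \<le> pp (j-1) x) \<and>
              (\<forall>y\<in>Mn. pp j y =
                 (if pp (j-1) y > 0 then
                    (if C y x then pp (j-1) y - pp (j-1) x
                     else pp (j-1) y - 2 * pp (j-1) x * mb y)
                  else pp (j-1) y)))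
         else sel j = None \<and> (\<forall>y\<in>Mn. pp j y = pp (j-1) y))"
  using run unfolding phase1_run_def Let_def Mn_def[symmetric] by blast

definition hp :: "nat \<Rightarrow> real" where
  "hp j = (case sel j of Some x \<Rightarrow> pp (j-1) x | None \<Rightarrow> 0)"

definition d :: "nat \<Rightarrow> pair \<Rightarrow> real" where
  "d j y = (if pp (j-1) y > 0 then (case sel j of Some x \<Rightarrow>
      (if C y x then pp (j-1) x else 2 * pp (j-1) x * mb y) | None \<Rightarrow> 0) else 0)"

lemma sel_Some: assumes "j \<in> {1..N}" "sel j = Some x"
  shows "x \<in> Mn \<and> Tail (snd x) = j \<and> pp (j-1) x > 0 \<and> hp j = pp (j-1) x \<and>
    (\<forall>y\<in>Mn. Tail (snd y) = j \<longrightarrow> pp (j-1) y \<le> pp (j-1) x)"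
proof -
  note r = run_step[OF assms(1)]
  show ?thesis
  proof (cases "\<exists>y\<in>{x \<in> Mn. Tail (snd x) = j}. pp (j-1) y > 0")
    case True
    with r obtain x' where x': "sel j = Some x'" "x' \<in> {x \<in> Mn. Tail (snd x) = j}"
      "\<forall>y\<in>{x \<in> Mn. Tail (snd x) = j}. pp (j-1) y \<le> pp (j-1) x'" by auto
    have xx: "x' = x" using x' assms by simp
    obtain y where y: "y\<in>{x \<in> Mn. Tail (snd x) = j}" "pp (j-1) y > 0" using True by blast
    have "pp (j-1) y \<le> pp (j-1) x" using x'(3) y(1) xx by blast
    hence "pp (j-1) x > 0" using y(2) by linarith
    moreover have "hp j = pp (j-1) x" using assms(2) by (simp add: hp_def)
    ultimately show ?thesis using x' xx by blast
  next
    case False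
    with r have "sel j = None" by auto
    with assms show ?thesis by simp
  qed
qed

lemma sel_None: assumes "j \<in> {1..N}" "sel j = None" "y \<in> Mn" "Tail (snd y) = j"
  shows "pp (j-1) y \<le> 0"
proof (rule ccontr)
  assume "\<not> pp (j-1) y \<le> 0"
  hence "\<exists>y\<in>{x \<in> Mn. Tail (snd x) = j}. pp (j-1) y > 0" using assms by (intro bexI[of _ y]) auto
  with run_step[OF assms(1)] assms(2) show False by auto
qed

lemma step_eq: assumes "j \<in> {1..N}" "y \<in> Mn" shows "pp j y = pp (j-1) y - d j y"
proof (cases "sel j")
  case None
  have "\<not> (\<exists>y\<in>{x \<in> Mn. Tail (snd x) = j}. pp (j-1) y > 0)"
    using run_step[OF assms(1)] None by (auto split: if_splits)
  with run_step[OF assms(1)] None assms show ?thesis by (simp add: d_def)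
next
  case (Some x)
  have "\<exists>y\<in>{x \<in> Mn. Tail (snd x) = j}. pp (j-1) y > 0"
    using sel_Some[OF assms(1) Some] by (intro bexI[of _ x]) auto
  with run_step[OF assms(1)] Some assms show ?thesis by (auto simp: d_def)
qed

lemma d_nonneg: assumes "j \<in> {1..N}" "y \<in> Mn" shows "0 \<le> d j y"
proof (cases "sel j")
  case None then show ?thesis by (simp add: d_def)
next
  case (Some x)
  have "pp (j-1) x > 0" using sel_Some[OF assms(1) Some] by auto
  moreover have "0 \<le> mb y" using mb_nonneg Mn_PM assms(2) by auto
  ultimately show ?thesis using Some by (auto simp: d_def)
qed

lemma nonpos_persist: assumes "y \<in> Mn" "pp a y \<le> 0" "a \<le> b" "b \<le> N" shows "pp b y \<le> 0"
  using assms(3,4)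
proof (induction b)
  case 0 then show ?case using assms(2) by simp
next
  case (Suc b)
  show ?case
  proof (cases "a = Suc b")
    case True then show ?thesis using assms(2) by simp
  next
    case False
    hence "pp b y \<le> 0" using Suc by auto
    moreover have "pp (Suc b) y = pp b y - d (Suc b) y"
      using step_eq[of "Suc b" y] Suc.prems assms(1) by simp
    ultimately show ?thesis by (simp add: d_def)
  qed
qed

lemma pos_back: assumes "y \<in> Mn" "pp b y > 0" "a \<le> b" "b \<le> N" shows "pp a y > 0"
  using nonpos_persist[OF assms(1) _ assms(3,4)] assms(2) by force

lemma after_tail: assumes "y \<in> Mn" "Tail (snd y) \<le> n" "n \<le> N" shows "pp n y \<le> 0"
proof -
  define t where "t = Tail (snd y)"
  have t: "t \<in> {1..N}" "t \<in> snd y" using tail_in Mn_PM assms(1) by (auto simp: t_def)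
  have se: "pp t y = pp (t-1) y - d t y" using step_eq t assms(1) by auto
  have "pp t y \<le> 0"
  proof (cases "pp (t-1) y > 0")
    case False then show ?thesis using se by (simp add: d_def)
  next
    case True
    show ?thesis
    proof (cases "sel t")
      case None
      then show ?thesis using sel_None[OF t(1) None assms(1)] t_def True by simp
    next
      case (Some x)
      note s = sel_Some[OF t(1) Some]
      have "t \<in> snd x" using s tail_in Mn_PM by metis
      hence "C y x" using t(2) by (auto simp: conflict_def)
      hence "d t y = pp (t-1) x" using True Some by (simp add: d_def)
      moreover have "pp (t-1) y \<le> pp (t-1) x" using s assms(1) t_def by auto
      ultimately show ?thesis using se by simp
    qed
  qed
  thus ?thesis using nonpos_persist[OF assms(1)] assms t_def by blast
qed

lemma telescope: assumes "y \<in> Mn" "n \<le> N" shows "pp 0 y - pp n y = (\<Sum>j\<in>{1..n}. d j y)"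
  using assms(2)
proof (induction n)
  case 0 then show ?case by simp
next
  case (Suc n)
  have "pp (Suc n) y = pp n y - d (Suc n) y" using step_eq[of "Suc n" y] Suc.prems assms(1) by simp
  then show ?case using Suc by simp
qed

end



context alg begin

lemma card_groups: assumes "x \<in> PM" shows "card {G\<in>Gs. fst x \<inter> G \<noteq> {}} \<le> T"
proof -
  define g where "g G = (SOME u. u \<in> fst x \<inter> G)" for G
  have gin: "g G \<in> fst x \<inter> G" if "G \<in> {G\<in>Gs. fst x \<inter> G \<noteq> {}}" for G
  proof -
    have "\<exists>u. u \<in> fst x \<inter> G" using that by blast
    thus ?thesis unfolding g_def by (rule someI_ex)
  qed
  have dj: "disjoint Gs" using part by (simp add: partition_on_def)
  have "inj_on g {G\<in>Gs. fst x \<inter> G \<noteq> {}}"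
  proof (rule inj_onI)
    fix G1 G2 assume a: "G1 \<in> {G\<in>Gs. fst x \<inter> G \<noteq> {}}" "G2 \<in> {G\<in>Gs. fst x \<inter> G \<noteq> {}}" "g G1 = g G2"
    hence "g G1 \<in> G1 \<inter> G2" using gin[OF a(1)] gin[OF a(2)] by auto
    show "G1 = G2"
    proof (rule ccontr)
      assume "G1 \<noteq> G2"
      hence "disjnt G1 G2" using dj a(1,2) unfolding disjoint_def pairwise_def by blast
      thus False using \<open>g G1 \<in> G1 \<inter> G2\<close> by (auto simp: disjnt_def)
    qed
  qed
  moreover have "g ` {G\<in>Gs. fst x \<inter> G \<noteq> {}} \<subseteq> fst x" using gin by auto
  moreover have "finite (fst x)" using Uprops[OF assms] finite_subset by blast
  ultimately have "card {G\<in>Gs. fst x \<inter> G \<noteq> {}} \<le> card (fst x)" by (rule card_inj_on_le)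
  thus ?thesis using Uprops[OF assms] by linarith
qed

lemma feasD1: "feas F \<Longrightarrow> G \<in> Gs \<Longrightarrow> card {x \<in> F. fst x \<inter> G \<noteq> {}} \<le> 1"
  unfolding feasible_def by blast
lemma feasD2: "feas F \<Longrightarrow> i \<in> {1..N} \<Longrightarrow> card {x \<in> F. i \<in> snd x} \<le> 1"
  unfolding feasible_def by blast
lemma feasD3: "feas F \<Longrightarrow> q \<in> {1..J} \<Longrightarrow> (\<Sum>x\<in>F. \<beta> q x) \<le> 1"
  unfolding feasible_def by blast
lemma feasD4: "feas F \<Longrightarrow> q \<in> I \<Longrightarrow> (\<Sum>x\<in>F. \<alpha> q x) \<le> 1"
  unfolding feasible_def by blast

lemma alpha_nonneg: "x \<in> PM \<Longrightarrow> q \<in> I \<Longrightarrow> 0 \<le> \<alpha> q x"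
  using alpha01 by force

lemma finite_Gs: "finite Gs"
proof -
  have "Gs \<subseteq> Pow {1..K}" using part by (auto simp: partition_on_def)
  thus ?thesis by (rule finite_subset) auto
qed

lemma card_conf: assumes F: "F \<subseteq> Mn" "feas F" and j: "j \<in> {1..N}" and s: "sel j = Some x"
  shows "card {y\<in>F. pp (j-1) y > 0 \<and> C y x} \<le> 1 + T + \<Delta>"
proof -
  note sx = sel_Some[OF j s]
  have finF: "finite F" using F finite_Mn finite_subset by blast
  have xPM: "x \<in> PM" using sx Mn_PM by auto
  define B1 where "B1 = {y\<in>F. j \<in> snd y}"
  define Gx where "Gx = {G\<in>Gs. fst x \<inter> G \<noteq> {}}"
  define B2 where "B2 = (\<Union>G\<in>Gx. {y\<in>F. fst y \<inter> G \<noteq> {}})"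
  define Ix where "Ix = {q\<in>I. \<alpha> q x = 1}"
  define B3 where "B3 = (\<Union>q\<in>Ix. {y\<in>F. \<alpha> q y = 1})"
  have sub: "{y\<in>F. pp (j-1) y > 0 \<and> C y x} \<subseteq> B1 \<union> B2 \<union> B3"
  proof
    fix y assume y: "y \<in> {y\<in>F. pp (j-1) y > 0 \<and> C y x}"
    hence yM: "y \<in> Mn" using F by auto
    show "y \<in> B1 \<union> B2 \<union> B3"
    proof (cases "snd y \<inter> snd x \<noteq> {}")
      case True
      have "\<not> Tail (snd y) \<le> j - 1"
      proof
        assume "Tail (snd y) \<le> j - 1"
        hence "pp (j-1) y \<le> 0" using after_tail[OF yM] j by auto
        thus False using y by auto
      qed
      hence tj: "Tail (snd y) \<ge> j" by auto
      obtain a b where ab: "snd y = {a..b}" "Tail (snd y) = b" using chunk Mn_PM yM by blast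
      obtain a' b' where ab': "snd x = {a'..b'}" "Tail (snd x) = b'" using chunk xPM by blast
      have bj: "b' = j" using ab'(2) sx by simp
      from True obtain k where k: "k \<in> snd y" "k \<in> snd x" by blast
      have "a \<le> k" using k(1) ab(1) by simp
      moreover have "k \<le> j" using k(2) ab'(1) bj by simp
      moreover have "j \<le> b" using tj ab(2) by simp
      ultimately have "j \<in> {a..b}" by simp
      hence "j \<in> snd y" using ab(1) by simp
      thus ?thesis using y by (auto simp: B1_def)
    next
      case False
      hence "(\<exists>G\<in>Gs. fst y \<inter> G \<noteq> {} \<and> fst x \<inter> G \<noteq> {}) \<or> (\<exists>q\<in>I. \<alpha> q y = 1 \<and> \<alpha> q x = 1)"
        using y by (auto simp: conflict_def)
      thus ?thesis
      proof
        assume "\<exists>G\<in>Gs. fst y \<inter> G \<noteq> {} \<and> fst x \<inter> G \<noteq> {}"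
        then obtain G where G: "G \<in> Gs" "fst y \<inter> G \<noteq> {}" "fst x \<inter> G \<noteq> {}" by blast
        have "G \<in> Gx" using G by (simp add: Gx_def)
        moreover have "y \<in> {y\<in>F. fst y \<inter> G \<noteq> {}}" using G y by simp
        ultimately have "y \<in> B2" unfolding B2_def by blast
        thus ?thesis by blast
      next
        assume "\<exists>q\<in>I. \<alpha> q y = 1 \<and> \<alpha> q x = 1"
        then obtain q where q: "q \<in> I" "\<alpha> q y = 1" "\<alpha> q x = 1" by blast
        have "q \<in> Ix" using q by (simp add: Ix_def)
        moreover have "y \<in> {y\<in>F. \<alpha> q y = 1}" using q y by simp
        ultimately have "y \<in> B3" unfolding B3_def by blast
        thus ?thesis by blast
      qed
    qed
  qed
  have c1: "card B1 \<le> 1" unfolding B1_def by (rule feasD2[OF F(2) j])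
  have c2: "card B2 \<le> T"
  proof -
    have fGx: "finite Gx" using finite_Gs by (auto simp: Gx_def)
    have "card B2 \<le> (\<Sum>G\<in>Gx. card {y\<in>F. fst y \<inter> G \<noteq> {}})" unfolding B2_def by (rule card_UN_le[OF fGx])
    also have "\<dots> \<le> (\<Sum>G\<in>Gx. 1)" by (rule sum_mono) (use feasD1[OF F(2)] in \<open>auto simp: Gx_def\<close>)
    also have "\<dots> = card Gx" by simp
    also have "\<dots> \<le> T" using card_groups[OF xPM] by (simp add: Gx_def)
    finally show ?thesis .
  qed
  have c3: "card B3 \<le> \<Delta>"
  proof -
    have fIx: "finite Ix" using finI by (auto simp: Ix_def)
    have each: "card {y\<in>F. \<alpha> q y = 1} \<le> 1" if q: "q \<in> I" for q
    proof -
      have "real (card {y\<in>F. \<alpha> q y = 1}) = (\<Sum>y\<in>{y\<in>F. \<alpha> q y = 1}. \<alpha> q y)" by simp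
      also have "\<dots> \<le> (\<Sum>y\<in>F. \<alpha> q y)"
      proof (rule sum_mono2[OF finF])
        show "{y\<in>F. \<alpha> q y = 1} \<subseteq> F" by blast
        fix b assume "b \<in> F - {y\<in>F. \<alpha> q y = 1}"
        hence "b \<in> PM" using F Mn_PM by blast
        thus "0 \<le> \<alpha> q b" using alpha_nonneg q by blast
      qed
      also have "\<dots> \<le> 1" by (rule feasD4[OF F(2) q])
      finally show ?thesis by simp
    qed
    have "card B3 \<le> (\<Sum>q\<in>Ix. card {y\<in>F. \<alpha> q y = 1})" unfolding B3_def by (rule card_UN_le[OF fIx])
    also have "\<dots> \<le> (\<Sum>q\<in>Ix. 1)" by (rule sum_mono) (use each in \<open>auto simp: Ix_def\<close>)
    also have "\<dots> = card Ix" by simp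
    finally have "card B3 \<le> card Ix" .
    moreover have "real (card Ix) \<le> \<Delta>"
    proof -
      have "real (card Ix) = (\<Sum>q\<in>Ix. \<alpha> q x)" by (simp add: Ix_def)
      also have "\<dots> \<le> (\<Sum>q\<in>I. \<alpha> q x)"
      proof (rule sum_mono2[OF finI])
        show "Ix \<subseteq> I" by (auto simp: Ix_def)
        fix b assume "b \<in> I - Ix"
        thus "0 \<le> \<alpha> b x" using alpha_nonneg xPM by blast
      qed
      also have "\<dots> \<le> \<Delta>" using alphaD xPM by auto
      finally show ?thesis .
    qed
    ultimately show ?thesis by linarith
  qed
  have cc: "card {y\<in>F. pp (j-1) y > 0 \<and> C y x} \<le> card (B1 \<union> B2 \<union> B3)"
  proof (rule card_mono[OF _ sub])
    have "B1 \<union> B2 \<union> B3 \<subseteq> F" by (auto simp: B1_def B2_def B3_def)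
    thus "finite (B1 \<union> B2 \<union> B3)" using finF finite_subset by blast
  qed
  have u1: "card (B1 \<union> B2 \<union> B3) \<le> card (B1 \<union> B2) + card B3" by (rule card_Un_le)
  have u2: "card (B1 \<union> B2) + card B3 \<le> (card B1 + card B2) + card B3" by (rule add_right_mono[OF card_Un_le])
  have u3: "(card B1 + card B2) + card B3 \<le> 1 + T + \<Delta>" by (rule add_mono[OF add_mono[OF c1 c2] c3])
  show ?thesis by (rule order.trans[OF cc order.trans[OF u1 order.trans[OF u2 u3]]])
qed

lemma sum_mb: assumes F: "F \<subseteq> Mn" "feas F" shows "(\<Sum>y\<in>F. mb y) \<le> J"
proof -
  have "(\<Sum>y\<in>F. mb y) \<le> (\<Sum>y\<in>F. \<Sum>q\<in>{1..J}. \<beta> q y)"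
    by (rule sum_mono) (use mb_le_sum Mn_PM F in auto)
  also have "\<dots> = (\<Sum>q\<in>{1..J}. \<Sum>y\<in>F. \<beta> q y)" by (rule sum.swap)
  also have "\<dots> \<le> (\<Sum>q\<in>{1..J}. 1)" by (rule sum_mono) (use feasD3[OF F(2)] in auto)
  finally show ?thesis by simp
qed

lemma sum_d: assumes F: "F \<subseteq> Mn" "feas F" and j: "j \<in> {1..N}"
  shows "(\<Sum>y\<in>F. d j y) \<le> (1 + T + \<Delta> + 2 * J) * hp j"
proof (cases "sel j")
  case None
  have "d j y = 0" for y unfolding d_def using None by (auto split: option.split)
  moreover have "hp j = 0" unfolding hp_def using None by (auto split: option.split)
  ultimately show ?thesis by simp
next
  case (Some x)
  note sx = sel_Some[OF j Some]
  have finF: "finite F" using F finite_Mn finite_subset by blast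
  define P where "P y = (pp (j-1) y > 0 \<and> C y x)" for y
  have "(\<Sum>y\<in>F. d j y) \<le> (\<Sum>y\<in>F. (if P y then hp j else 0) + 2 * hp j * mb y)"
  proof (rule sum_mono)
    fix y assume "y \<in> F"
    hence "y \<in> Mn" using F by auto
    hence "0 \<le> mb y" by (rule mb_nonneg[OF Mn_PM])
    then show "d j y \<le> (if P y then hp j else 0) + 2 * hp j * mb y"
      using sx Some by (auto simp: d_def P_def)
  qed
  also have "\<dots> = hp j * card {y\<in>F. P y} + 2 * hp j * (\<Sum>y\<in>F. mb y)"
  proof -
    have e1: "(\<Sum>y\<in>F. (if P y then hp j else 0) + 2 * hp j * mb y) = (\<Sum>y\<in>F. (if P y then hp j else 0)) + (\<Sum>y\<in>F. 2 * hp j * mb y)"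
      by (rule sum.distrib)
    have e2: "(\<Sum>y\<in>F. (if P y then hp j else 0)) = (\<Sum>y\<in>{y\<in>F. P y}. hp j)"
      by (rule sum.inter_filter[OF finF, symmetric])
    have e3: "(\<Sum>y\<in>{y\<in>F. P y}. hp j) = hp j * card {y\<in>F. P y}" by simp
    have e4: "(\<Sum>y\<in>F. 2 * hp j * mb y) = 2 * hp j * (\<Sum>y\<in>F. mb y)" by (rule sum_distrib_left[symmetric])
    show ?thesis using e1 e2 e3 e4 by simp
  qed
  also have "\<dots> \<le> hp j * (1 + T + \<Delta>) + 2 * hp j * J"
  proof (rule add_mono)
    have c: "card {y\<in>F. P y} \<le> 1 + T + \<Delta>"
      using card_conf[OF F j Some] unfolding P_def .
    have "real (card {y\<in>F. P y}) \<le> real (1 + T + \<Delta>)" using c by (simp only: of_nat_le_iff)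
    hence "real (card {y\<in>F. P y}) \<le> 1 + T + \<Delta>" by simp
    thus "hp j * card {y\<in>F. P y} \<le> hp j * (1 + T + \<Delta>)" using sx by (intro mult_left_mono) auto
    show "2 * hp j * (\<Sum>y\<in>F. mb y) \<le> 2 * hp j * J" using sum_mb[OF F] sx by (intro mult_left_mono) auto
  qed
  finally show ?thesis by (simp add: algebra_simps)
qed

lemma upper: assumes F: "F \<subseteq> Mn" "feas F"
  shows "(\<Sum>y\<in>F. p y) \<le> (1 + T + \<Delta> + 2 * J) * (\<Sum>j\<in>{1..N}. hp j)"
proof -
  have "(\<Sum>y\<in>F. p y) \<le> (\<Sum>y\<in>F. \<Sum>j\<in>{1..N}. d j y)"
  proof (rule sum_mono)
    fix y assume "y \<in> F"
    hence yM: "y \<in> Mn" using F by auto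
    have "Tail (snd y) \<le> N" using tail_in[OF Mn_PM[OF yM]] by simp
    hence "pp N y \<le> 0" using after_tail[OF yM] by blast
    thus "p y \<le> (\<Sum>j\<in>{1..N}. d j y)" using telescope[OF yM order.refl] run0[OF yM] by linarith
  qed
  also have "\<dots> = (\<Sum>j\<in>{1..N}. \<Sum>y\<in>F. d j y)" by (rule sum.swap)
  also have "\<dots> \<le> (\<Sum>j\<in>{1..N}. (1 + T + \<Delta> + 2 * J) * hp j)" by (rule sum_mono) (rule sum_d[OF F])
  finally show ?thesis by (simp add: sum_distrib_left)
qed

end



context alg begin

lemma infeas: assumes finA: "finite A" and AP: "A \<subseteq> PM" and z: "z \<in> Mn" "z \<notin> A"
  and fA: "feas A" and nf: "\<not> feas (insert z A)"
  shows "(\<exists>x\<in>A. C x z) \<or> (\<exists>q\<in>{1..J}. (\<Sum>x\<in>A. \<beta> q x) > 1/2)"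
proof (rule ccontr)
  assume H: "\<not> ((\<exists>x\<in>A. C x z) \<or> (\<exists>q\<in>{1..J}. (\<Sum>x\<in>A. \<beta> q x) > 1/2))"
  hence nc: "\<And>x. x \<in> A \<Longrightarrow> \<not> C x z" by blast
  have nb: "(\<Sum>x\<in>A. \<beta> q x) \<le> 1/2" if "q \<in> {1..J}" for q
  proof -
    have "\<not> (\<Sum>x\<in>A. \<beta> q x) > 1/2" using H that by blast
    thus ?thesis by linarith
  qed
  have zP: "z \<in> PM" using z Mn_PM by blast
  have g: "card {x \<in> insert z A. fst x \<inter> G \<noteq> {}} \<le> 1" if G: "G \<in> Gs" for G
  proof (cases "fst z \<inter> G = {}")
    case True
    hence "{x \<in> insert z A. fst x \<inter> G \<noteq> {}} = {x \<in> A. fst x \<inter> G \<noteq> {}}" by blast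
    thus ?thesis using feasD1[OF fA G] by simp
  next
    case False
    have "\<And>x. x \<in> A \<Longrightarrow> fst x \<inter> G = {}"
    proof -
      fix x assume "x \<in> A"
      hence "\<not> C x z" by (rule nc)
      hence "\<not> (fst x \<inter> G \<noteq> {} \<and> fst z \<inter> G \<noteq> {})" using G unfolding conflict_def by blast
      thus "fst x \<inter> G = {}" using False by blast
    qed
    hence "{x \<in> insert z A. fst x \<inter> G \<noteq> {}} = {z}" using False by blast
    thus ?thesis by simp
  qed
  have c: "card {x \<in> insert z A. i \<in> snd x} \<le> 1" if i: "i \<in> {1..N}" for i
  proof (cases "i \<in> snd z")
    case False
    hence "{x \<in> insert z A. i \<in> snd x} = {x \<in> A. i \<in> snd x}" by blast
    thus ?thesis using feasD2[OF fA i] by simp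
  next
    case True
    have "\<And>x. x \<in> A \<Longrightarrow> i \<notin> snd x"
    proof -
      fix x assume "x \<in> A"
      hence "\<not> C x z" by (rule nc)
      hence "snd x \<inter> snd z = {}" unfolding conflict_def by blast
      thus "i \<notin> snd x" using True by blast
    qed
    hence "{x \<in> insert z A. i \<in> snd x} = {z}" using True by blast
    thus ?thesis by simp
  qed
  have b: "(\<Sum>x\<in>insert z A. \<beta> q x) \<le> 1" if q: "q \<in> {1..J}" for q
  proof -
    have "(\<Sum>x\<in>insert z A. \<beta> q x) = \<beta> q z + (\<Sum>x\<in>A. \<beta> q x)" using finA z(2) by simp
    moreover have "\<beta> q z \<le> 1/2" using Mn_narrow[OF z(1) q] .
    ultimately show ?thesis using nb[OF q] by linarith
  qed
  have a: "(\<Sum>x\<in>insert z A. \<alpha> q x) \<le> 1" if q: "q \<in> I" for q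
  proof -
    have e: "(\<Sum>x\<in>insert z A. \<alpha> q x) = \<alpha> q z + (\<Sum>x\<in>A. \<alpha> q x)" using finA z(2) by simp
    show ?thesis
    proof (cases "\<alpha> q z = 1")
      case True
      have "\<And>x. x \<in> A \<Longrightarrow> \<alpha> q x = 0"
      proof -
        fix x assume xA: "x \<in> A"
        hence "\<not> C x z" by (rule nc)
        hence "\<alpha> q x \<noteq> 1" using q True unfolding conflict_def by blast
        moreover have "\<alpha> q x \<in> {0, 1}" using alpha01 xA AP q by blast
        ultimately show "\<alpha> q x = 0" by simp
      qed
      hence "(\<Sum>x\<in>A. \<alpha> q x) = 0" by simp
      thus ?thesis using e True by simp
    next
      case False
      hence "\<alpha> q z = 0" using alpha01 zP q by blast
      thus ?thesis using e feasD4[OF fA q] by simp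
    qed
  qed
  have "feas (insert z A)" unfolding feasible_def using g c b a by blast
  with nf show False by blast
qed

lemma set_L: "set (stack_of N sel) = {x. \<exists>j\<in>{1..N}. sel j = Some x}"
proof -
  have "set (stack_of N sel) = (the \<circ> sel) ` {j \<in> {1..<N+1}. sel j \<noteq> None}"
    by (simp only: stack_of_def map_filter_def set_map set_filter set_upt)
  also have "\<dots> = {x. \<exists>j\<in>{1..N}. sel j = Some x}"
  proof
    show "(the \<circ> sel) ` {j \<in> {1..<N+1}. sel j \<noteq> None} \<subseteq> {x. \<exists>j\<in>{1..N}. sel j = Some x}"
    proof
      fix x assume "x \<in> (the \<circ> sel) ` {j \<in> {1..<N+1}. sel j \<noteq> None}"
      then obtain j where j: "j \<in> {1..<N+1}" "sel j \<noteq> None" "x = the (sel j)" by auto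
      hence "sel j = Some x" by auto
      moreover have "j \<in> {1..N}" using j by auto
      ultimately show "x \<in> {x. \<exists>j\<in>{1..N}. sel j = Some x}" by blast
    qed
    show "{x. \<exists>j\<in>{1..N}. sel j = Some x} \<subseteq> (the \<circ> sel) ` {j \<in> {1..<N+1}. sel j \<noteq> None}"
    proof
      fix x assume "x \<in> {x. \<exists>j\<in>{1..N}. sel j = Some x}"
      then obtain j where j: "j \<in> {1..N}" "sel j = Some x" by blast
      hence "j \<in> {j \<in> {1..<N+1}. sel j \<noteq> None}" by auto
      moreover have "x = (the \<circ> sel) j" using j by simp
      ultimately show "x \<in> (the \<circ> sel) ` {j \<in> {1..<N+1}. sel j \<noteq> None}" by blast
    qed
  qed
  finally show ?thesis .
qed

lemma sorted_L: "sorted_wrt (\<lambda>a b. Tail (snd a) < Tail (snd b)) (stack_of N sel)"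
  unfolding stack_of_def map_filter_def sorted_wrt_map
proof (rule sorted_wrt_mono_rel[OF _ sorted_wrt_filter[OF sorted_wrt_upt]])
  fix x y assume x: "x \<in> set (filter (\<lambda>x. sel x \<noteq> None) [1..<N + 1])"
    and y: "y \<in> set (filter (\<lambda>x. sel x \<noteq> None) [1..<N + 1])" and xy: "x < y"
  from x obtain a where a: "sel x = Some a" "x \<in> {1..N}" by auto
  from y obtain b where b: "sel y = Some b" "y \<in> {1..N}" by auto
  have "Tail (snd a) = x" using sel_Some[OF a(2) a(1)] by blast
  moreover have "Tail (snd b) = y" using sel_Some[OF b(2) b(1)] by blast
  ultimately show "Tail (snd ((the \<circ> sel) x)) < Tail (snd ((the \<circ> sel) y))" using a b xy by simp
qed

end



context alg begin

definition "Sout = output_IIa N Gs J \<beta> I \<alpha> sel"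
abbreviation "\<tau> x \<equiv> Tail (snd x)"

lemma greedy_facts:
  "feas Sout \<and> Sout \<subseteq> set (stack_of N sel) \<and>
   (\<forall>x\<in>set (stack_of N sel). feas {y\<in>Sout. \<tau> x < \<tau> y} \<and> (x \<in> Sout \<longleftrightarrow> feas (insert x {y\<in>Sout. \<tau> x < \<tau> y})))"
proof -
  have s: "sorted_wrt (\<lambda>a b. \<tau> b < \<tau> a) (rev (stack_of N sel))"
    unfolding sorted_wrt_rev using sorted_L by simp
  have f0: "feas {}" by (simp add: feasible_def)
  note G = greedy_props[of "\<lambda>x. \<tau> x" "rev (stack_of N sel)" "{}" feas, OF s _ f0]
  have eq: "Sout = greedy feas (rev (stack_of N sel)) {}" by (simp add: Sout_def output_IIa_def)
  show ?thesis unfolding eq using G by simp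
qed

lemma Sout_sel: assumes "x \<in> Sout" shows "\<tau> x \<in> {1..N} \<and> sel (\<tau> x) = Some x \<and> x \<in> Mn"
proof -
  have "x \<in> set (stack_of N sel)" using greedy_facts assms by blast
  then obtain j where j: "j \<in> {1..N}" "sel j = Some x" using set_L by blast
  note sel_Some[OF j]
  thus ?thesis using j by auto
qed

lemma finite_Sout: "finite Sout"
proof -
  have "Sout \<subseteq> set (stack_of N sel)" using greedy_facts by blast
  thus ?thesis using finite_subset by blast
qed

lemma Sout_Mn: "Sout \<subseteq> Mn" using Sout_sel by blast

lemma p_decomp: assumes x: "x \<in> Sout"
  shows "p x = hp (\<tau> x) + (\<Sum>i\<in>{1..N}. if i < \<tau> x then d i x else 0)"
proof -
  note sx = Sout_sel[OF x]
  note ss = sel_Some[of "\<tau> x" x]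
  have xM: "x \<in> Mn" using sx by blast
  have t: "1 \<le> \<tau> x" "\<tau> x \<le> N" using sx by auto
  have tel: "pp 0 x - pp (\<tau> x - 1) x = (\<Sum>j\<in>{1..\<tau> x - 1}. d j x)"
    using telescope[OF xM, of "\<tau> x - 1"] t by simp
  have hpx: "hp (\<tau> x) = pp (\<tau> x - 1) x" using ss sx by blast
  have "(\<Sum>i\<in>{1..N}. if i < \<tau> x then d i x else 0) = (\<Sum>i\<in>{i\<in>{1..N}. i < \<tau> x}. d i x)"
    by (rule sum.inter_filter[symmetric]) simp
  also have "{i\<in>{1..N}. i < \<tau> x} = {1..\<tau> x - 1}" using t by auto
  finally have "(\<Sum>i\<in>{1..N}. if i < \<tau> x then d i x else 0) = (\<Sum>j\<in>{1..\<tau> x - 1}. d j x)" .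
  thus ?thesis using tel hpx run0[OF xM] by simp
qed

lemma per_i: assumes i: "i \<in> {1..N}"
  shows "hp i \<le> (if i \<in> \<tau> ` Sout then hp i else 0) + (\<Sum>x\<in>{x\<in>Sout. i < \<tau> x}. d i x)"
proof -
  define A where "A = {x\<in>Sout. i < \<tau> x}"
  have finA: "finite A" using finite_Sout by (simp add: A_def)
  have AM: "A \<subseteq> Mn" using Sout_Mn by (auto simp: A_def)
  have dnn: "0 \<le> (\<Sum>x\<in>A. d i x)" by (rule sum_nonneg) (use d_nonneg[OF i] AM in blast)
  show ?thesis
  proof (cases "sel i")
    case None
    hence "hp i = 0" by (simp add: hp_def)
    thus ?thesis using dnn unfolding A_def by simp
  next
    case (Some xi)
    note sx = sel_Some[OF i Some]
    show ?thesis
    proof (cases "xi \<in> Sout")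
      case True
      hence "i \<in> \<tau> ` Sout" using sx by force
      thus ?thesis using dnn unfolding A_def by simp
    next
      case False
      have xiL: "xi \<in> set (stack_of N sel)" using set_L i Some by blast
      have tx: "\<tau> xi = i" using sx by blast
      have fA: "feas A" and nfA: "\<not> feas (insert xi A)"
        using greedy_facts xiL False tx unfolding A_def by auto
      have xiA: "xi \<notin> A" using False by (simp add: A_def)
      have AP: "A \<subseteq> PM" using AM Mn_PM by blast
      have pos: "pp (i-1) x > 0" if xA: "x \<in> A" for x
      proof -
        have xS: "x \<in> Sout" and ix: "i < \<tau> x" using xA by (auto simp: A_def)
        note s2 = Sout_sel[OF xS]
        have "pp (\<tau> x - 1) x > 0" using sel_Some[of "\<tau> x" x] s2 by blast
        thus ?thesis using pos_back[of x "\<tau> x - 1" "i - 1"] s2 ix by auto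
      qed
      have hpi: "hp i = pp (i-1) xi" "hp i > 0" using sx by auto
      have dform: "d i x = (if C x xi then hp i else 2 * hp i * mb x)" if xA: "x \<in> A" for x
        using pos[OF xA] Some hpi by (simp add: d_def)
      have "hp i \<le> (\<Sum>x\<in>A. d i x)"
        using infeas[OF finA AP sx[THEN conjunct1] xiA fA nfA]
      proof
        assume "\<exists>x\<in>A. C x xi"
        then obtain x0 where x0: "x0 \<in> A" "C x0 xi" by blast
        have "d i x0 \<le> (\<Sum>x\<in>A. d i x)"
          by (rule member_le_sum[OF x0(1) _ finA]) (use d_nonneg[OF i] AM in blast)
        moreover have "d i x0 = hp i" using dform[OF x0(1)] x0(2) by simp
        ultimately show ?thesis by simp
      next
        assume "\<exists>q\<in>{1..J}. (\<Sum>x\<in>A. \<beta> q x) > 1/2"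
        then obtain q where q: "q \<in> {1..J}" "(\<Sum>x\<in>A. \<beta> q x) > 1/2" by blast
        have "(\<Sum>x\<in>A. 2 * hp i * \<beta> q x) \<le> (\<Sum>x\<in>A. d i x)"
        proof (rule sum_mono)
          fix x assume xA: "x \<in> A"
          have xM: "x \<in> Mn" using xA AM by blast
          have b1: "\<beta> q x \<le> 1/2" using Mn_narrow[OF xM q(1)] .
          have b2: "\<beta> q x \<le> mb x" using mb_ge[OF Mn_PM[OF xM] q(1)] .
          show "2 * hp i * \<beta> q x \<le> d i x"
          proof (cases "C x xi")
            case True
            have "2 * hp i * \<beta> q x \<le> 2 * hp i * (1/2)"
              using b1 hpi(2) by (intro mult_left_mono) auto
            thus ?thesis using dform[OF xA] True by simp
          next
            case False
            have "2 * hp i * \<beta> q x \<le> 2 * hp i * mb x"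
              using b2 hpi(2) by (intro mult_left_mono) auto
            thus ?thesis using dform[OF xA] False by simp
          qed
        qed
        moreover have "(\<Sum>x\<in>A. 2 * hp i * \<beta> q x) = 2 * hp i * (\<Sum>x\<in>A. \<beta> q x)"
          by (rule sum_distrib_left[symmetric])
        moreover have "hp i < 2 * hp i * (\<Sum>x\<in>A. \<beta> q x)"
        proof -
          have "hp i * 1 < hp i * (2 * (\<Sum>x\<in>A. \<beta> q x))"
            using q(2) hpi(2) by (intro mult_strict_left_mono) auto
          thus ?thesis by (simp add: algebra_simps)
        qed
        ultimately show ?thesis by linarith
      qed
      thus ?thesis using dnn unfolding A_def by simp
    qed
  qed
qed

lemma lower: "(\<Sum>i\<in>{1..N}. hp i) \<le> (\<Sum>x\<in>Sout. p x)"
proof -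
  have inj: "inj_on \<tau> Sout"
  proof (rule inj_onI)
    fix x y assume "x \<in> Sout" "y \<in> Sout" "\<tau> x = \<tau> y"
    thus "x = y" using Sout_sel by (metis option.inject)
  qed
  have TS: "\<tau> ` Sout \<subseteq> {1..N}" using Sout_sel by blast
  have "(\<Sum>x\<in>Sout. p x) = (\<Sum>x\<in>Sout. hp (\<tau> x)) + (\<Sum>x\<in>Sout. \<Sum>i\<in>{1..N}. if i < \<tau> x then d i x else 0)"
    using p_decomp by (simp add: sum.distrib)
  also have "(\<Sum>x\<in>Sout. hp (\<tau> x)) = (\<Sum>i\<in>\<tau> ` Sout. hp i)"
    by (rule sum.reindex[OF inj, symmetric, unfolded comp_def])
  also have "\<dots> = (\<Sum>i\<in>{1..N}. if i \<in> \<tau> ` Sout then hp i else 0)"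
  proof -
    have "{i\<in>{1..N}. i \<in> \<tau> ` Sout} = \<tau> ` Sout" using TS by blast
    hence "(\<Sum>i\<in>\<tau> ` Sout. hp i) = (\<Sum>i\<in>{i\<in>{1..N}. i \<in> \<tau> ` Sout}. hp i)" by simp
    also have "\<dots> = (\<Sum>i\<in>{1..N}. if i \<in> \<tau> ` Sout then hp i else 0)"
      by (rule sum.inter_filter) simp
    finally show ?thesis .
  qed
  also have "(\<Sum>x\<in>Sout. \<Sum>i\<in>{1..N}. if i < \<tau> x then d i x else 0)
      = (\<Sum>i\<in>{1..N}. \<Sum>x\<in>Sout. if i < \<tau> x then d i x else 0)" by (rule sum.swap)
  also have "\<dots> = (\<Sum>i\<in>{1..N}. \<Sum>x\<in>{x\<in>Sout. i < \<tau> x}. d i x)"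
    by (rule sum.cong[OF refl], rule sum.inter_filter[OF finite_Sout, symmetric])
  finally have e: "(\<Sum>x\<in>Sout. p x) = (\<Sum>i\<in>{1..N}. (if i \<in> \<tau> ` Sout then hp i else 0) + (\<Sum>x\<in>{x\<in>Sout. i < \<tau> x}. d i x))"
    by (simp add: sum.distrib)
  have "(\<Sum>i\<in>{1..N}. hp i) \<le> (\<Sum>i\<in>{1..N}. (if i \<in> \<tau> ` Sout then hp i else 0) + (\<Sum>x\<in>{x\<in>Sout. i < \<tau> x}. d i x))"
    by (rule sum_mono) (rule per_i)
  thus ?thesis using e by simp
qed

end



theorem propositionI:
  fixes K N T J \<Delta> :: nat
    and Gs :: "nat set set"
    and p :: "pair \<Rightarrow> real"
    and \<beta> :: "nat \<Rightarrow> pair \<Rightarrow> real"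
    and I :: "'i set"
    and \<alpha> :: "'i \<Rightarrow> pair \<Rightarrow> real"
    and pp :: "nat \<Rightarrow> pair \<Rightarrow> real"
    and sel :: "nat \<Rightarrow> pair option"
  assumes "K \<ge> 1" and "N \<ge> 1" and "T \<ge> 1"
    and "partition_on {1..K} Gs"
    and "finite I"
    and "\<forall>x\<in>pairsM K N T Gs. p x \<ge> 0"
    and "\<forall>x\<in>pairsM K N T Gs. \<forall>q\<in>{1..J}. 0 \<le> \<beta> q x \<and> \<beta> q x \<le> 1"
    and "\<forall>x\<in>pairsM K N T Gs. \<forall>q\<in>I. \<alpha> q x \<in> {0, 1}"
    and "\<forall>x\<in>pairsM K N T Gs. (\<Sum>q\<in>I. \<alpha> q x) \<le> real \<Delta>"
    and "phase1_run K N T Gs J \<beta> I \<alpha> p pp sel"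
  shows "(\<Sum>x\<in>output_IIa N Gs J \<beta> I \<alpha> sel. p x)
           \<ge> Wopt_narrow K N T Gs J \<beta> I \<alpha> p / (1 + real T + real \<Delta> + 2 * real J)"
proof -
  interpret A: alg K N T J \<Delta> Gs p \<beta> I \<alpha> pp sel
    by (rule alg.intro) (rule assms)+
  define W where "W = {sum p F | F. F \<subseteq> narrow K N T Gs J \<beta> \<and> feasible Gs N J \<beta> I \<alpha> F}"
  have Mn: "narrow K N T Gs J \<beta> = A.Mn" by (simp add: A.Mn_def)
  have "W \<subseteq> (sum p) ` Pow A.Mn" unfolding W_def Mn by blast
  hence fin: "finite W" using A.finite_Mn finite_subset by blast
  have f0: "feasible Gs N J \<beta> I \<alpha> {}" by (simp add: feasible_def)
  have "sum p {} \<in> W" unfolding W_def using f0 by blast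
  hence ne: "W \<noteq> {}" by blast
  have "Max W \<in> W" by (rule Max_in[OF fin ne])
  then obtain F where F: "Max W = sum p F" "F \<subseteq> A.Mn" "feasible Gs N J \<beta> I \<alpha> F"
    unfolding W_def Mn by blast
  have wo: "Wopt_narrow K N T Gs J \<beta> I \<alpha> p = Max W" by (simp add: Wopt_narrow_def W_def)
  have r: "real (1 + T + \<Delta> + 2 * J) = 1 + real T + real \<Delta> + 2 * real J" by simp
  have rpos: "0 < 1 + real T + real \<Delta> + 2 * real J" by simp
  have "Max W \<le> (1 + real T + real \<Delta> + 2 * real J) * (\<Sum>i\<in>{1..N}. A.hp i)"
    using A.upper[OF F(2,3)] F(1) unfolding r by simp
  also have "\<dots> \<le> (1 + real T + real \<Delta> + 2 * real J) * (\<Sum>x\<in>A.Sout. p x)"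
    using A.lower rpos by (intro mult_left_mono) auto
  finally have "Max W \<le> (\<Sum>x\<in>A.Sout. p x) * (1 + real T + real \<Delta> + 2 * real J)"
    by (simp add: mult.commute)
  hence "Max W / (1 + real T + real \<Delta> + 2 * real J) \<le> (\<Sum>x\<in>A.Sout. p x)"
    using rpos by (simp add: pos_divide_le_eq)
  thus ?thesis using wo by (simp add: A.Sout_def)
qed



end
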